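(* Let $(A;R)\in\mathcal C$ and $C\subseteq A$ with $C\le A$. For a closed set $F$ of the restriction $(C,\mathrm{cl}_C)$ (where $\mathrm{cl}_C(X)=\mathrm{cl}(X)\cap C$) write $\tilde F=\mathrm{cl}(F)$, its closure in $PG(A;R)$. Then for any closed sets $F_1,F_2$ of $(C,\mathrm{cl}_C)$, $\tilde F_1\cap\tilde F_2=\mathrm{cl}(F_1\cap F_2)$.
   Context: A set system is a pair $(A;R)$ where $R$ is a set of finite non-empty subsets of $A$; for $X\subseteq A$, $R[X]=\{r\in R:r\subseteq X\}$ and $\delta(X)=|X|-|R[X]|$. $\mathcal C$ is the class of finite set systems with $\delta(X)\ge0$ for all $X\subseteq A$. $X\le A$ means $\delta(X)\le\delta(X')$ for all $X\subseteq X'\subseteq A$. $d(X)=\min\{\delta(Y):X\subseteq Y\subseteq A\}$, $\mathrm{cl}(X)=\{y:d(X\cup\{y\})=d(X)\}$, and $PG(A;R)$ is the matroid $(A,\mathrm{cl})$; a closed set of a pregeometry is a set equal to its own closure. *)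

theory Defs
  imports Main
begin

definition Rsub :: "'a set set \<Rightarrow> 'a set \<Rightarrow> 'a set set" where
  "Rsub R X = {r \<in> R. r \<subseteq> X}"

definition delta :: "'a set set \<Rightarrow> 'a set \<Rightarrow> int" where
  "delta R X = int (card X) - int (card (Rsub R X))"

definition in_C :: "'a set \<Rightarrow> 'a set set \<Rightarrow> bool" where
  "in_C A R \<longleftrightarrow> finite A \<and> (\<forall>r\<in>R. finite r \<and> r \<noteq> {} \<and> r \<subseteq> A)
     \<and> (\<forall>X. X \<subseteq> A \<longrightarrow> delta R X \<ge> 0)"

definition selfsuff :: "'a set \<Rightarrow> 'a set set \<Rightarrow> 'a set \<Rightarrow> bool" where
  "selfsuff A R X \<longleftrightarrow> X \<subseteq> A \<and> (\<forall>X'. X \<subseteq> X' \<and> X' \<subseteq> A \<longrightarrow> delta R X \<le> delta R X')"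

definition dim :: "'a set \<Rightarrow> 'a set set \<Rightarrow> 'a set \<Rightarrow> int" where
  "dim A R X = Min (delta R ` {Y. X \<subseteq> Y \<and> Y \<subseteq> A})"

definition cl :: "'a set \<Rightarrow> 'a set set \<Rightarrow> 'a set \<Rightarrow> 'a set" where
  "cl A R X = {y \<in> A. dim A R (X \<union> {y}) = dim A R X}"

definition closed_restr :: "'a set \<Rightarrow> 'a set set \<Rightarrow> 'a set \<Rightarrow> 'a set \<Rightarrow> bool" where
  "closed_restr A R C F \<longleftrightarrow> F \<subseteq> C \<and> cl A R F \<inter> C = F"

end

theory Submission
  imports Defs
begin

definition cross :: "'a set set \<Rightarrow> 'a set \<Rightarrow> 'a set \<Rightarrow> 'a set set" where
  "cross R X Y = {r \<in> R. r \<subseteq> X \<union> Y \<and> \<not> r \<subseteq> X \<and> \<not> r \<subseteq> Y}"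

lemma inC_finR: "in_C A R \<Longrightarrow> finite R"
  unfolding in_C_def by (meson PowI finite_Pow_iff rev_finite_subset subsetI)

lemma mod_eq:
  assumes "in_C A R" "X \<subseteq> A" "Y \<subseteq> A"
  shows "delta R (X \<union> Y) + delta R (X \<inter> Y) + int (card (cross R X Y)) = delta R X + delta R Y"
proof -
  have fA: "finite A" using assms(1) by (simp add: in_C_def)
  have fX: "finite X" "finite Y" using fA assms rev_finite_subset by auto
  have fR: "finite R" using inC_finR assms(1) .
  have c1: "card (X \<union> Y) + card (X \<inter> Y) = card X + card Y" using card_Un_Int fX by metis
  have e1: "Rsub R (X \<union> Y) = (Rsub R X \<union> Rsub R Y) \<union> cross R X Y"
    unfolding Rsub_def cross_def by blast
  have e2: "Rsub R X \<inter> Rsub R Y = Rsub R (X \<inter> Y)" unfolding Rsub_def by blast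
  have d: "(Rsub R X \<union> Rsub R Y) \<inter> cross R X Y = {}" unfolding Rsub_def cross_def by blast
  have fs: "finite (Rsub R X)" "finite (Rsub R Y)" "finite (cross R X Y)"
    unfolding Rsub_def cross_def using fR by auto
  have c2: "card (Rsub R (X \<union> Y)) = card (Rsub R X \<union> Rsub R Y) + card (cross R X Y)"
    unfolding e1 using card_Un_disjoint[OF _ fs(3) d] fs by auto
  have c3: "card (Rsub R X \<union> Rsub R Y) + card (Rsub R (X \<inter> Y)) = card (Rsub R X) + card (Rsub R Y)"
    unfolding e2[symmetric] using card_Un_Int fs by metis
  show ?thesis unfolding delta_def using c1 c2 c3 by linarith
qed

lemma submod:
  assumes "in_C A R" "X \<subseteq> A" "Y \<subseteq> A"
  shows "delta R (X \<union> Y) + delta R (X \<inter> Y) \<le> delta R X + delta R Y"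
  using mod_eq[OF assms] by linarith

lemma dim_fin:
  assumes "in_C A R" "X \<subseteq> A"
  shows "finite (delta R ` {Y. X \<subseteq> Y \<and> Y \<subseteq> A})" "delta R ` {Y. X \<subseteq> Y \<and> Y \<subseteq> A} \<noteq> {}"
proof -
  have "finite A" using assms(1) by (simp add: in_C_def)
  then have "finite {Y. Y \<subseteq> A}" by simp
  then show "finite (delta R ` {Y. X \<subseteq> Y \<and> Y \<subseteq> A})"
    by (rule finite_surj[where f="delta R"]) auto
  show "delta R ` {Y. X \<subseteq> Y \<and> Y \<subseteq> A} \<noteq> {}" using assms(2) by blast
qed

lemma dim_le:
  assumes "in_C A R" "X \<subseteq> Y" "Y \<subseteq> A"
  shows "dim A R X \<le> delta R Y"
  unfolding dim_def using dim_fin[OF assms(1)] assms by (intro Min_le) auto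

lemma dim_ex:
  assumes "in_C A R" "X \<subseteq> A"
  shows "\<exists>Y. X \<subseteq> Y \<and> Y \<subseteq> A \<and> delta R Y = dim A R X"
proof -
  have "dim A R X \<in> delta R ` {Y. X \<subseteq> Y \<and> Y \<subseteq> A}"
    unfolding dim_def using dim_fin[OF assms] by (rule Min_in)
  then show ?thesis by auto
qed

lemma dim_mono:
  assumes "in_C A R" "X \<subseteq> X'" "X' \<subseteq> A"
  shows "dim A R X \<le> dim A R X'"
proof -
  obtain Y where "X' \<subseteq> Y" "Y \<subseteq> A" "delta R Y = dim A R X'" using dim_ex[OF assms(1,3)] by blast
  then show ?thesis using dim_le[OF assms(1), of X Y] assms by auto
qed

lemma cl_char:
  assumes "in_C A R" "X \<subseteq> A"
  shows "y \<in> cl A R X \<longleftrightarrow> y \<in> A \<and> (\<exists>Y. X \<union> {y} \<subseteq> Y \<and> Y \<subseteq> A \<and> delta R Y = dim A R X)"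
proof
  assume "y \<in> cl A R X"
  then have y: "y \<in> A" "dim A R (X \<union> {y}) = dim A R X" unfolding cl_def by auto
  then show "y \<in> A \<and> (\<exists>Y. X \<union> {y} \<subseteq> Y \<and> Y \<subseteq> A \<and> delta R Y = dim A R X)"
    using dim_ex[OF assms(1), of "X \<union> {y}"] assms(2) by auto
next
  assume "y \<in> A \<and> (\<exists>Y. X \<union> {y} \<subseteq> Y \<and> Y \<subseteq> A \<and> delta R Y = dim A R X)"
  then obtain Y where Y: "y \<in> A" "X \<union> {y} \<subseteq> Y" "Y \<subseteq> A" "delta R Y = dim A R X" by blast
  have "dim A R (X \<union> {y}) \<le> dim A R X" using dim_le[OF assms(1) Y(2,3)] Y(4) by simp
  moreover have "dim A R X \<le> dim A R (X \<union> {y})" using dim_mono[OF assms(1), of X "X \<union> {y}"] assms(2) Y by auto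
  ultimately show "y \<in> cl A R X" unfolding cl_def using Y by auto
qed

lemma cl_props:
  assumes "in_C A R" "X \<subseteq> A"
  shows "X \<subseteq> cl A R X" "cl A R X \<subseteq> A" "delta R (cl A R X) = dim A R X"
    "\<And>Y. X \<subseteq> Y \<Longrightarrow> Y \<subseteq> A \<Longrightarrow> delta R Y \<le> dim A R X \<Longrightarrow> Y \<subseteq> cl A R X"
proof -
  show 4: "\<And>Y. X \<subseteq> Y \<Longrightarrow> Y \<subseteq> A \<Longrightarrow> delta R Y \<le> dim A R X \<Longrightarrow> Y \<subseteq> cl A R X"
  proof
    fix Y y assume h: "X \<subseteq> Y" "Y \<subseteq> A" "delta R Y \<le> dim A R X" "y \<in> Y"
    have "delta R Y = dim A R X" using dim_le[OF assms(1) h(1,2)] h(3) by simp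
    then show "y \<in> cl A R X" using cl_char[OF assms, of y] h by auto
  qed
  show "cl A R X \<subseteq> A" unfolding cl_def by auto
  show "X \<subseteq> cl A R X" unfolding cl_def using assms(2) by (auto simp: insert_absorb)
  define M where "M = {Y. X \<subseteq> Y \<and> Y \<subseteq> A \<and> delta R Y = dim A R X}"
  have fA: "finite A" using assms(1) by (simp add: in_C_def)
  have "M \<subseteq> Pow A" unfolding M_def by blast
  then have "finite M" using fA by (meson finite_Pow_iff rev_finite_subset)
  moreover have "M \<noteq> {}" unfolding M_def using dim_ex[OF assms] by blast
  ultimately have mx: "Max (card ` M) \<in> card ` M" by (intro Max_in) auto
  then obtain Z where Z: "Z \<in> M" "card Z = Max (card ` M)" by (metis imageE)
  have Zmax: "\<And>Y. Y \<in> M \<Longrightarrow> card Y \<le> card Z"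
    using Z(2) \<open>finite M\<close> by (metis Max_ge finite_imageI imageI)
  have ZM: "X \<subseteq> Z" "Z \<subseteq> A" "delta R Z = dim A R X" using Z(1) unfolding M_def by auto
  have "cl A R X \<subseteq> Z"
  proof
    fix y assume "y \<in> cl A R X"
    then obtain Y where Y: "X \<union> {y} \<subseteq> Y" "Y \<subseteq> A" "delta R Y = dim A R X"
      using cl_char[OF assms] by blast
    have "delta R (Z \<union> Y) + delta R (Z \<inter> Y) \<le> delta R Z + delta R Y"
      using submod[OF assms(1) ZM(2) Y(2)] .
    moreover have "dim A R X \<le> delta R (Z \<inter> Y)" using dim_le[OF assms(1), of X "Z \<inter> Y"] ZM Y by auto
    moreover have "dim A R X \<le> delta R (Z \<union> Y)" using dim_le[OF assms(1), of X "Z \<union> Y"] ZM Y by auto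
    ultimately have "Z \<union> Y \<in> M" unfolding M_def using ZM Y by auto
    then have "card (Z \<union> Y) \<le> card Z" by (rule Zmax)
    moreover have "finite (Z \<union> Y)" using fA ZM Y by (meson Un_least rev_finite_subset)
    ultimately have "Z \<union> Y = Z" by (metis Un_upper1 card_seteq)
    then show "y \<in> Z" using Y by auto
  qed
  moreover have "Z \<subseteq> cl A R X" using 4 ZM by simp
  ultimately have "cl A R X = Z" by blast
  then show "delta R (cl A R X) = dim A R X" using ZM by simp
qed

lemma cl_mono:
  assumes "in_C A R" "X \<subseteq> X'" "X' \<subseteq> A"
  shows "cl A R X \<subseteq> cl A R X'"
proof -
  have XA: "X \<subseteq> A" using assms by auto
  note p = cl_props[OF assms(1) XA] and q = cl_props[OF assms(1) assms(3)]
  have "delta R (cl A R X \<union> cl A R X') + delta R (cl A R X \<inter> cl A R X') \<le> delta R (cl A R X) + delta R (cl A R X')"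
    using submod[OF assms(1) p(2) q(2)] .
  moreover have "dim A R X \<le> delta R (cl A R X \<inter> cl A R X')"
    using dim_le[OF assms(1), of X "cl A R X \<inter> cl A R X'"] p(1,2) q(1) assms(2) by auto
  ultimately have "delta R (cl A R X \<union> cl A R X') \<le> dim A R X'" using p(3) q(3) by linarith
  then have "cl A R X \<union> cl A R X' \<subseteq> cl A R X'" using q(4)[of "cl A R X \<union> cl A R X'"] p(2) q(1,2) by auto
  then show ?thesis by auto
qed

lemma restr_le:
  assumes "in_C A R" "selfsuff A R C" "X \<subseteq> A"
  shows "delta R (X \<inter> C) \<le> delta R X"
proof -
  have CA: "C \<subseteq> A" using assms(2) by (simp add: selfsuff_def)
  have "delta R C \<le> delta R (X \<union> C)" using assms(2) CA assms(3) unfolding selfsuff_def by auto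
  then show ?thesis using submod[OF assms(1) assms(3) CA] by linarith
qed

theorem theorem6p5:
  fixes A C F1 F2 :: "'a set" and R :: "'a set set"
  assumes "in_C A R"
    and "C \<subseteq> A"
    and "selfsuff A R C"
    and "closed_restr A R C F1"
    and "closed_restr A R C F2"
  shows "cl A R F1 \<inter> cl A R F2 = cl A R (F1 \<inter> F2)"
proof -
  note iC = assms(1)
  define K1 where "K1 = cl A R F1"
  define K2 where "K2 = cl A R F2"
  define G where "G = F1 \<inter> F2"
  define H where "H = K1 \<inter> K2"
  have F1C: "F1 \<subseteq> C" "K1 \<inter> C = F1" using assms(4) unfolding closed_restr_def K1_def by auto
  have F2C: "F2 \<subseteq> C" "K2 \<inter> C = F2" using assms(5) unfolding closed_restr_def K2_def by auto
  have F1A: "F1 \<subseteq> A" and F2A: "F2 \<subseteq> A" using F1C F2C assms(2) by auto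
  note p1 = cl_props[OF iC F1A, folded K1_def] and p2 = cl_props[OF iC F2A, folded K2_def]
  have d1: "delta R F1 = delta R K1"
    using restr_le[OF iC assms(3) p1(2)] F1C(2) dim_le[OF iC order_refl F1A] p1(3) by simp
  have d2: "delta R F2 = delta R K2"
    using restr_le[OF iC assms(3) p2(2)] F2C(2) dim_le[OF iC order_refl F2A] p2(3) by simp
  note me1 = mod_eq[OF iC p1(2) assms(2)]
  have ssC: "\<And>X'. C \<subseteq> X' \<Longrightarrow> X' \<subseteq> A \<Longrightarrow> delta R C \<le> delta R X'"
    using assms(3) unfolding selfsuff_def by blast
  have Ybig: "delta R C \<le> delta R (K1 \<union> C)" "delta R C \<le> delta R (K2 \<union> (K1 \<union> C))"
    by (rule ssC; use p1(2) p2(2) assms(2) in auto)+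
  have cr1: "cross R K1 C = {}"
  proof -
    have "finite (cross R K1 C)" unfolding cross_def using inC_finR[OF iC] by auto
    moreover have "int (card (cross R K1 C)) \<le> 0" using me1 F1C(2) d1 Ybig(1) by (simp add: Int_commute)
    ultimately show ?thesis by simp
  qed
  have dY: "delta R (K1 \<union> C) = delta R C" using me1 F1C(2) d1 cr1 by simp
  have K2Y: "K2 \<inter> (K1 \<union> C) = F2 \<union> H" unfolding H_def using F2C by blast
  have "delta R (F2 \<union> H) \<le> delta R F2"
    using submod[OF iC p2(2), of "K1 \<union> C"] p1(2) assms(2) K2Y Ybig(2) dY d2 by auto
  have GH: "G \<subseteq> H" unfolding G_def H_def using p1(1) p2(1) by auto
  have F2H: "F2 \<inter> H = G" unfolding G_def H_def using F1C F2C p2(1) p1(1) by blast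
  have cr2: "cross R F2 H = {}"
  proof (rule ccontr)
    assume "cross R F2 H \<noteq> {}"
    then obtain r where r: "r \<in> R" "r \<subseteq> F2 \<union> H" "\<not> r \<subseteq> F2" "\<not> r \<subseteq> H"
      unfolding cross_def by auto
    have "r \<subseteq> K1 \<union> C" using r(2) F2C(1) unfolding H_def by auto
    moreover have "\<not> r \<subseteq> K1"
    proof
      assume "r \<subseteq> K1"
      then have "r \<subseteq> (F2 \<union> H) \<inter> K1" using r(2) by auto
      also have "\<dots> \<subseteq> H" unfolding H_def using F1C F2C p2(1) by blast
      finally show False using r(4) by simp
    qed
    moreover have "\<not> r \<subseteq> C"
    proof
      assume "r \<subseteq> C"
      then have "r \<subseteq> (F2 \<union> H) \<inter> C" using r(2) by auto
      also have "\<dots> \<subseteq> F2" unfolding H_def using F2C by blast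
      finally show False using r(3) by simp
    qed
    ultimately have "r \<in> cross R K1 C" unfolding cross_def using r(1) by auto
    then show False using cr1 by simp
  qed
  have HA: "H \<subseteq> A" unfolding H_def using p1(2) by auto
  have dH: "delta R H \<le> delta R G"
    using mod_eq[OF iC F2A HA] cr2 F2H \<open>delta R (F2 \<union> H) \<le> delta R F2\<close> by simp
  have GA: "G \<subseteq> A" unfolding G_def using F1A by auto
  note pg = cl_props[OF iC GA]
  have clGH: "cl A R G \<subseteq> H" unfolding H_def K1_def K2_def G_def
    using cl_mono[OF iC _ F1A] cl_mono[OF iC _ F2A] by auto
  have "cl A R G \<inter> C = G" using clGH pg(1) F1C F2C unfolding H_def G_def by blast
  then have "delta R G \<le> dim A R G" using restr_le[OF iC assms(3) pg(2)] pg(3) by simp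
  then have "H \<subseteq> cl A R G" using pg(4)[OF GH HA] dH by simp
  then show ?thesis using clGH unfolding H_def K1_def K2_def G_def by blast
qed

end
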